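(* Let $\chi$ be a Dirichlet character, $r\ge1$ an integer and $N,w$ positive integers. Put \[C_\chi(N,w,r)=\sum_{\substack{v\ge1\\ N\mid v}}\frac{h_\chi(v)}{\varphi(vw)v^r}.\] Then $C_\chi(N,w,r)=c_\chi(N,w,r)B_\chi(r)$, where \[c_\chi(N,w,r)=\frac{h_\chi(N)\kappa(Nw)}{N^{r+1}w}\prod_{p\mid N}\frac{p^{r+1}}{p^{r+2}-p^{r+1}-p+\chi(p)}\prod_{\substack{p\nmid N\\ p\mid w}}\frac{p^{r+1}-1}{p^{r+2}-p^{r+1}-p+\chi(p)}\] and \[B_\chi(r)=\prod_p\left(1+\frac{p(\chi(p)-1)}{(p-1)(p^{r+1}-\chi(p))}\right),\] $p$ running over rational primes. In particular $C_\chi(1,1,r)=\sum_{v\ge1}\frac{h_\chi(v)}{\varphi(v)v^r}=B_\chi(r)$.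
   Context: For a Dirichlet character $\chi$, $h_\chi=\mu*\chi$, i.e. $h_\chi(n)=\sum_{e\mid n}\mu(e)\chi(n/e)$. $\kappa(n)=\prod_{p\mid n}p$ is the squarefree kernel of $n$. $\varphi$ is Euler's totient function. *)

theory Defs
  imports "HOL-Analysis.Analysis" "HOL-Number_Theory.Number_Theory"
    "HOL-Computational_Algebra.Squarefree"
begin

definition dirichlet_character :: "nat \<Rightarrow> (nat \<Rightarrow> complex) \<Rightarrow> bool" where
  "dirichlet_character m chi \<longleftrightarrow> m > 0 \<and>
     (\<forall>a b. chi (a * b) = chi a * chi b) \<and>
     (\<forall>a. chi (a + m) = chi a) \<and>
     (\<forall>a. chi a \<noteq> 0 \<longleftrightarrow> coprime a m)"

definition moebius :: "nat \<Rightarrow> int" where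
  "moebius n = (if n = 0 \<or> \<not> squarefree n then 0 else (-1) ^ card (prime_factors n))"

definition h_chi :: "(nat \<Rightarrow> complex) \<Rightarrow> nat \<Rightarrow> complex" where
  "h_chi chi n = (\<Sum>e | e dvd n. of_int (moebius e) * chi (n div e))"

definition kappa :: "nat \<Rightarrow> nat" where
  "kappa n = (\<Prod>p\<in>prime_factors n. p)"

definition C_chi :: "(nat \<Rightarrow> complex) \<Rightarrow> nat \<Rightarrow> nat \<Rightarrow> nat \<Rightarrow> complex" where
  "C_chi chi N w r = infsum (\<lambda>v. h_chi chi v / (of_nat (totient (v * w)) * of_nat v ^ r))
                      {v. v \<ge> 1 \<and> N dvd v}"

definition B_factor :: "(nat \<Rightarrow> complex) \<Rightarrow> nat \<Rightarrow> nat \<Rightarrow> complex" where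
  "B_factor chi r p = 1 + of_nat p * (chi p - 1) /
        ((of_nat p - 1) * (of_nat p ^ (r + 1) - chi p))"

definition c_chi :: "(nat \<Rightarrow> complex) \<Rightarrow> nat \<Rightarrow> nat \<Rightarrow> nat \<Rightarrow> complex" where
  "c_chi chi N w r =
     h_chi chi N * of_nat (kappa (N * w)) / (of_nat N ^ (r + 1) * of_nat w) *
     (\<Prod>p\<in>prime_factors N. of_nat p ^ (r + 1) /
        (of_nat p ^ (r + 2) - of_nat p ^ (r + 1) - of_nat p + chi p)) *
     (\<Prod>p\<in>prime_factors w - prime_factors N. (of_nat p ^ (r + 1) - 1) /
        (of_nat p ^ (r + 2) - of_nat p ^ (r + 1) - of_nat p + chi p))"

end

theory Submission
  imports Defs
begin
section \<open>Characters\<close>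

lemma dc_mult: "dirichlet_character m chi \<Longrightarrow> chi (a * b) = chi a * chi b"
  by (simp add: dirichlet_character_def)

lemma dc_one: assumes "dirichlet_character m chi" shows "chi 1 = 1"
proof -
  have "chi 1 \<noteq> 0" using assms by (simp add: dirichlet_character_def)
  moreover have "chi 1 * chi 1 = chi 1 * 1" using dc_mult[OF assms, of 1 1] by simp
  ultimately show ?thesis using mult_left_cancel by blast
qed

lemma dc_Suc0: assumes "dirichlet_character m chi" shows "chi (Suc 0) = 1"
  using dc_one[OF assms] by simp

lemma dc_power: assumes "dirichlet_character m chi" shows "chi (a ^ k) = chi a ^ k"
  by (induction k) (simp_all add: dc_Suc0[OF assms] dc_mult[OF assms])

lemma dc_period: assumes "dirichlet_character m chi" shows "chi (a + k * m) = chi a"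
proof (induction k)
  case (Suc k)
  have "chi (a + Suc k * m) = chi ((a + k * m) + m)" by (simp add: algebra_simps)
  also have "\<dots> = chi (a + k * m)" using assms by (simp add: dirichlet_character_def)
  finally show ?case using Suc by simp
qed simp

lemma dc_mod: assumes "dirichlet_character m chi" shows "chi a = chi (a mod m)"
  using dc_period[OF assms, of "a mod m" "a div m"] by simp

lemma dc_norm_le: assumes "dirichlet_character m chi" shows "norm (chi a) \<le> 1"
proof (cases "chi a = 0")
  case False
  hence cop: "coprime a m" using assms by (simp add: dirichlet_character_def)
  have m0: "m > 0" using assms by (simp add: dirichlet_character_def)
  have "[a ^ totient m = 1] (mod m)" using euler_theorem[OF cop] .
  hence "chi (a ^ totient m) = chi 1"
    using dc_mod[OF assms] by (metis cong_def)
  hence "chi a ^ totient m = 1" by (simp add: dc_power[OF assms] dc_Suc0[OF assms])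
  hence "norm (chi a) ^ totient m = 1" by (metis norm_one norm_power)
  moreover have "totient m > 0" using m0 by simp
  ultimately have "norm (chi a) = 1"
    using power_eq_imp_eq_base[of "norm (chi a)" "totient m" 1] by simp
  thus ?thesis by simp
qed simp

lemma moebius_mult:
  assumes "coprime a b" "a > 0" "b > 0"
  shows "moebius (a * b) = moebius a * moebius b"
proof (cases "squarefree a \<and> squarefree b")
  case True
  hence sq: "squarefree (a * b)" using squarefree_mult_coprime assms by blast
  have pf: "prime_factors (a * b) = prime_factors a \<union> prime_factors b"
    using assms by (simp add: prime_factors_product)
  have disj: "prime_factors a \<inter> prime_factors b = {}"
    using assms(1) by (auto simp: in_prime_factors_iff) (meson coprime_common_divisor not_prime_unit)
  have "card (prime_factors (a * b)) = card (prime_factors a) + card (prime_factors b)"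
    unfolding pf by (rule card_Un_disjoint) (use disj in auto)
  thus ?thesis using True sq assms by (simp add: moebius_def power_add)
next
  case False
  hence "\<not> squarefree (a * b)" using squarefree_multD by blast
  hence 1: "moebius (a * b) = 0" by (simp add: moebius_def)
  have "moebius a = 0 \<or> moebius b = 0" using False unfolding moebius_def by argo
  thus ?thesis using 1 by auto
qed

lemma moebius_prime_power:
  assumes "prime p"
  shows "moebius (p ^ i) = (if i = 0 then 1 else if i = 1 then -1 else 0)"
proof -
  have "prime_factors (p ^ i) = (if i = 0 then {} else {p})"
  proof (cases "i = 0")
    case False
    then show ?thesis using assms prime_factors_power[of i p] by (simp add: prime_factorization_prime)
  qed simp
  moreover have "squarefree (p ^ i) \<longleftrightarrow> i \<le> 1"
    using assms by (auto simp: squarefree_power_iff squarefree_prime)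
  ultimately show ?thesis using assms by (auto simp: moebius_def)
qed

lemma gcd_split_coprime:
  fixes a b e :: nat
  assumes "coprime a b" "e dvd a * b"
  shows "gcd e a * gcd e b = e"
proof (cases "e = 0")
  case True thus ?thesis using assms by simp
next
  case False
  define g where "g = gcd e a"
  define e' where "e' = e div g"
  have g0: "g > 0" using False by (simp add: g_def)
  have ee: "e = g * e'" by (simp add: e'_def g_def)
  have cop: "coprime e' (a div g)" unfolding e'_def g_def
    by (rule div_gcd_coprime) (use False in auto)
  have ga: "g * (a div g) = a" by (simp add: g_def)
  have "g * e' dvd g * (a div g) * b" using assms(2) unfolding ga ee[symmetric] .
  hence "e' dvd (a div g) * b" using g0 by (simp add: mult.assoc)
  hence "e' dvd b" using cop coprime_dvd_mult_right_iff by blast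
  moreover have "e' dvd e" using ee by simp
  ultimately have "e' dvd gcd e b" by simp
  hence 2: "e dvd g * gcd e b" unfolding ee by simp
  have c: "coprime (gcd e a) (gcd e b)" using assms(1)
    by (meson coprime_commute coprime_divisors gcd_dvd2)
  have 1: "gcd e a * gcd e b dvd e" using c by (simp add: divides_mult)
  show ?thesis using 1 2 unfolding g_def by (simp add: dvd_antisym)
qed

lemma gcd_dvd_mult_left':
  fixes a b d1 d2 :: nat
  assumes "coprime a b" "d1 dvd a" "d2 dvd b"
  shows "gcd (d1 * d2) a = d1"
  by (metis assms coprime_divisors gcd_mult_left_right_cancel gcd_nat.eq_iff gcd_unique_nat)

lemma h_chi_mult:
  assumes dc: "dirichlet_character m chi" and "coprime a b" "a > 0" "b > 0"
  shows "h_chi chi (a * b) = h_chi chi a * h_chi chi b"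
proof -
  let ?S = "{d. d dvd a} \<times> {d. d dvd b}"
  have "h_chi chi a * h_chi chi b =
     (\<Sum>(d1,d2)\<in>?S. of_int (moebius d1) * chi (a div d1) * (of_int (moebius d2) * chi (b div d2)))"
    unfolding h_chi_def by (simp add: sum_product sum.cartesian_product)
  also have "\<dots> = (\<Sum>e | e dvd a * b. of_int (moebius e) * chi (a * b div e))"
  proof (rule sum.reindex_bij_witness[where i = "\<lambda>e. (gcd e a, gcd e b)" and j = "\<lambda>(d1,d2). d1 * d2"])
    fix x assume x: "x \<in> ?S"
    obtain d1 d2 where xd: "x = (d1, d2)" "d1 dvd a" "d2 dvd b" using x by auto
    have g2: "gcd (d1 * d2) b = d2"
      using gcd_dvd_mult_left'[of b a d2 d1] xd assms(2) by (simp add: coprime_commute mult.commute)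
    have g1: "gcd (d1 * d2) a = d1"
      using gcd_dvd_mult_left'[of a b d1 d2] xd assms(2) by simp
    show "(\<lambda>e. (gcd e a, gcd e b)) ((\<lambda>(d1,d2). d1 * d2) x) = x" using xd g1 g2 by simp
    show "(\<lambda>(d1,d2). d1 * d2) x \<in> {e. e dvd a * b}" using xd by (simp add: mult_dvd_mono)
    have "a * b div (d1 * d2) = (a div d1) * (b div d2)" using xd by (simp add: div_mult_div_if_dvd)
    moreover have "coprime d1 d2" using xd assms(2) coprime_divisors by blast
    moreover have "d1 > 0" "d2 > 0" using xd assms by auto
    ultimately show "of_int (moebius ((\<lambda>(d1,d2). d1 * d2) x)) * chi (a * b div ((\<lambda>(d1,d2). d1 * d2) x))
       = (case x of (d1, d2) \<Rightarrow> of_int (moebius d1) * chi (a div d1) * (of_int (moebius d2) * chi (b div d2)))"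
      using xd by (simp add: moebius_mult dc_mult[OF dc])
  next
    fix e assume e: "e \<in> {e. e dvd a * b}"
    show "(\<lambda>(d1,d2). d1 * d2) ((\<lambda>e. (gcd e a, gcd e b)) e) = e"
      using gcd_split_coprime[OF assms(2)] e by simp
    show "(\<lambda>e. (gcd e a, gcd e b)) e \<in> ?S" by simp
  qed
  also have "\<dots> = h_chi chi (a * b)" by (simp add: h_chi_def)
  finally show ?thesis ..
qed

lemma moebius_Suc0 [simp]: "moebius (Suc 0) = 1" by (simp add: moebius_def)
lemma moebius_1 [simp]: "moebius 1 = 1" by (simp add: moebius_def)

lemma divisors_prime_power:
  assumes "prime (p::nat)" shows "{e. e dvd p ^ k} = (\<lambda>i. p ^ i) ` {..k}"
  using assms by (auto simp: divides_primepow_nat le_imp_power_dvd)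

lemma h_chi_prime_power:
  assumes dc: "dirichlet_character m chi" and p: "prime p"
  shows "h_chi chi (p ^ k) = (if k = 0 then 1 else chi p ^ (k - 1) * (chi p - 1))"
proof -
  have inj: "inj_on (\<lambda>i. p ^ i) {..k}" using p prime_gt_1_nat[OF p] by (auto simp: inj_on_def power_inject_exp)
  have "h_chi chi (p ^ k) = (\<Sum>i\<le>k. of_int (moebius (p ^ i)) * chi (p ^ k div p ^ i))"
    unfolding h_chi_def divisors_prime_power[OF p] by (simp add: sum.reindex[OF inj])
  also have "\<dots> = (\<Sum>i\<le>k. of_int (moebius (p ^ i)) * chi p ^ (k - i))"
    using p by (intro sum.cong) (auto simp: power_diff dc_power[OF dc, symmetric] prime_gt_0_nat)
  also have "\<dots> = (\<Sum>i\<in>{..k} \<inter> {0,1}. of_int (moebius (p ^ i)) * chi p ^ (k - i))"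
    by (intro sum.mono_neutral_right) (auto simp: moebius_prime_power[OF p])
  also have "\<dots> = (if k = 0 then 1 else chi p ^ (k - 1) * (chi p - 1))"
  proof (cases k)
    case (Suc j)
    hence "{..k} \<inter> {0,1} = {0,1}" by auto
    thus ?thesis using Suc by (simp add: moebius_prime_power[OF p] algebra_simps)
  qed simp
  finally show ?thesis .
qed

lemma h_chi_1 [simp]: "h_chi chi 1 = chi 1"
proof -
  have "{e. e dvd (1::nat)} = {1}" by auto
  thus ?thesis by (simp add: h_chi_def)
qed

lemma multiplicative_prod_primes:
  fixes f :: "nat \<Rightarrow> 'a :: comm_monoid_mult"
  assumes mult: "\<And>a b. coprime a b \<Longrightarrow> a > 0 \<Longrightarrow> b > 0 \<Longrightarrow> f (a * b) = f a * f b"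
    and f1: "f 1 = 1" and fin: "finite A" and pr: "\<forall>p\<in>A. prime p"
  shows "f (\<Prod>p\<in>A. p ^ g p) = (\<Prod>p\<in>A. f (p ^ g p))"
  using fin pr
proof (induction A rule: finite_induct)
  case empty thus ?case using f1 by simp
next
  case (insert q A)
  have "\<forall>p\<in>A. coprime q p" using insert primes_coprime by (metis insert_iff)
  hence "coprime (q ^ g q) (\<Prod>p\<in>A. p ^ g p)"
    by (intro prod_coprime_right coprime_power_left_iff[THEN iffD2] coprime_power_right_iff[THEN iffD2]) auto
  moreover have "q ^ g q > 0" using insert by (simp add: prime_gt_0_nat)
  moreover have "(\<Prod>p\<in>A. p ^ g p) > 0" using insert by (simp add: prime_gt_0_nat prod_pos)
  ultimately show ?case using insert by (simp add: mult)
qed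

lemma prime_factorization_superset:
  fixes v :: nat
  assumes "v > 0" "finite T" "prime_factors v \<subseteq> T" "\<forall>p\<in>T. prime p"
  shows "v = (\<Prod>p\<in>T. p ^ multiplicity p v)"
proof -
  have "v = (\<Prod>p\<in>prime_factors v. p ^ multiplicity p v)" using prime_factorization_nat assms(1) by blast
  also have "\<dots> = (\<Prod>p\<in>T. p ^ multiplicity p v)"
  proof (rule prod.mono_neutral_left[OF assms(2,3)])
    show "\<forall>i\<in>T - prime_factors v. i ^ multiplicity i v = 1"
      using assms(1,4) by (auto simp: prime_factors_multiplicity)
  qed
  finally show ?thesis .
qed

lemma multiplicative_superset:
  fixes f :: "nat \<Rightarrow> 'a :: comm_monoid_mult"
  assumes mult: "\<And>a b. coprime a b \<Longrightarrow> a > 0 \<Longrightarrow> b > 0 \<Longrightarrow> f (a * b) = f a * f b"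
    and f1: "f 1 = 1" and "v > 0" "finite T" "\<forall>p\<in>T. prime p" "prime_factors v \<subseteq> T"
  shows "f v = (\<Prod>p\<in>T. f (p ^ multiplicity p v))"
proof -
  have "f v = f (\<Prod>p\<in>T. p ^ multiplicity p v)" using prime_factorization_superset assms(3,4,5,6) by metis
  also have "\<dots> = (\<Prod>p\<in>T. f (p ^ multiplicity p v))"
    by (rule multiplicative_prod_primes[OF mult f1 assms(4,5)])
  finally show ?thesis .
qed

lemma h_chi_Suc0 [simp]: "h_chi chi (Suc 0) = chi (Suc 0)"
  using h_chi_1[of chi] by simp

definition aloc :: "(nat \<Rightarrow> complex) \<Rightarrow> nat \<Rightarrow> nat \<Rightarrow> nat \<Rightarrow> nat \<Rightarrow> nat \<Rightarrow> complex" where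
 "aloc chi N w r p k = (if multiplicity p N \<le> k then h_chi chi (p ^ k) /
     (of_nat (totient (p ^ (k + multiplicity p w))) * of_nat p ^ (k * r)) else 0)"

definition Gf :: "(nat \<Rightarrow> complex) \<Rightarrow> nat \<Rightarrow> nat \<Rightarrow> nat \<Rightarrow> nat \<Rightarrow> complex" where
 "Gf chi N w r v = (if N dvd v then h_chi chi v / (of_nat (totient (v * w)) * of_nat v ^ r) else 0)"

lemma dvd_iff_mult_T:
  fixes N v :: nat
  assumes "N > 0" "v > 0" "\<forall>p\<in>T. prime p" "prime_factors N \<subseteq> T"
  shows "N dvd v \<longleftrightarrow> (\<forall>p\<in>T. multiplicity p N \<le> multiplicity p v)"
proof
  assume "N dvd v" thus "\<forall>p\<in>T. multiplicity p N \<le> multiplicity p v"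
    using assms by (auto intro: dvd_imp_multiplicity_le)
next
  assume H: "\<forall>p\<in>T. multiplicity p N \<le> multiplicity p v"
  show "N dvd v"
  proof (rule multiplicity_le_imp_dvd)
    show "N \<noteq> 0" using assms by simp
    fix p :: nat assume p: "prime p"
    show "multiplicity p N \<le> multiplicity p v"
    proof (cases "p \<in> T")
      case False
      hence "p \<notin> prime_factors N" using assms by auto
      hence "multiplicity p N = 0" using p assms by (auto simp: prime_factors_multiplicity)
      thus ?thesis by simp
    qed (use H in auto)
  qed
qed

lemma G_repr:
  assumes dc: "dirichlet_character m chi" and N: "N > 0" and w: "w > 0" and v: "v > 0"
    and T: "finite T" "\<forall>p\<in>T. prime p" "prime_factors (N * w) \<subseteq> T" "prime_factors v \<subseteq> T"
  shows "Gf chi N w r v = (\<Prod>p\<in>T. aloc chi N w r p (multiplicity p v))"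
proof -
  have pfN: "prime_factors N \<subseteq> T" and pfw: "prime_factors w \<subseteq> T"
    using T(3) N w by (auto simp: prime_factors_product)
  have hv: "h_chi chi v = (\<Prod>p\<in>T. h_chi chi (p ^ multiplicity p v))"
    by (rule multiplicative_superset[OF _ _ v T(1,2,4)])
       (auto simp: h_chi_mult[OF dc] dc_Suc0[OF dc])
  have pfvw: "prime_factors (v * w) \<subseteq> T" using T(4) pfw v w by (simp add: prime_factors_product)
  have tv: "totient (v * w) = (\<Prod>p\<in>T. totient (p ^ multiplicity p (v * w)))"
    by (rule multiplicative_superset[OF _ _ _ T(1,2) pfvw]) (auto simp: totient_mult_coprime v w)
  have mvw: "multiplicity p (v * w) = multiplicity p v + multiplicity p w" if "p \<in> T" for p
    using T(2) that v w by (simp add: prime_elem_multiplicity_mult_distrib)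
  have tv': "of_nat (totient (v * w)) = (\<Prod>p\<in>T. (of_nat (totient (p ^ (multiplicity p v + multiplicity p w))) :: complex))"
    unfolding tv of_nat_prod by (intro prod.cong) (simp_all add: mvw)
  have pv: "(of_nat v :: complex) ^ r = (\<Prod>p\<in>T. of_nat p ^ (multiplicity p v * r))"
  proof -
    have "v = (\<Prod>p\<in>T. p ^ multiplicity p v)" using prime_factorization_superset v T(1,4,2) by blast
    hence "(of_nat v :: complex) ^ r = (\<Prod>p\<in>T. (of_nat p) ^ multiplicity p v) ^ r"
      by (metis (no_types, lifting) of_nat_power of_nat_prod prod.cong)
    thus ?thesis by (simp add: prod_power_distrib power_mult)
  qed
  show ?thesis
  proof (cases "N dvd v")
    case True
    hence ge: "\<forall>p\<in>T. multiplicity p N \<le> multiplicity p v"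
      using dvd_iff_mult_T[OF N v T(2) pfN] by simp
    have "Gf chi N w r v = (\<Prod>p\<in>T. h_chi chi (p ^ multiplicity p v)) /
       ((\<Prod>p\<in>T. (of_nat (totient (p ^ (multiplicity p v + multiplicity p w))) :: complex)) *
        (\<Prod>p\<in>T. of_nat p ^ (multiplicity p v * r)))"
      using True by (simp add: Gf_def hv tv' pv)
    also have "\<dots> = (\<Prod>p\<in>T. aloc chi N w r p (multiplicity p v))"
      using ge by (simp add: aloc_def prod_dividef prod.distrib[symmetric] cong: prod.cong)
    finally show ?thesis .
  next
    case False
    then obtain p where p: "p \<in> T" "\<not> multiplicity p N \<le> multiplicity p v"
      using dvd_iff_mult_T[OF N v T(2) pfN] by auto
    hence "aloc chi N w r p (multiplicity p v) = 0" by (simp add: aloc_def)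
    hence "(\<Prod>p\<in>T. aloc chi N w r p (multiplicity p v)) = 0" using p T(1) by (metis prod_zero_iff)
    thus ?thesis using False by (simp add: Gf_def)
  qed
qed

definition smooth :: "nat set \<Rightarrow> nat set" where
  "smooth P = {v. v \<ge> 1 \<and> prime_factors v \<subseteq> P}"

lemma prime_factorization_superset':
  fixes v :: nat
  assumes "v > 0" "finite T" "prime_factors v \<subseteq> T" "\<forall>p\<in>T. prime p"
  shows "v = (\<Prod>p\<in>T. p ^ multiplicity p v)"
proof -
  have "v = (\<Prod>p\<in>prime_factors v. p ^ multiplicity p v)" using prime_factorization_nat assms(1) by blast
  also have "\<dots> = (\<Prod>p\<in>T. p ^ multiplicity p v)"
  proof (rule prod.mono_neutral_left[OF assms(2,3)])
    show "\<forall>i\<in>T - prime_factors v. i ^ multiplicity i v = 1"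
      using assms(1,4) by (auto simp: prime_factors_multiplicity)
  qed
  finally show ?thesis .
qed

lemma smooth_bij:
  assumes fin: "finite P" and pr: "\<forall>p\<in>P. prime p"
  shows "bij_betw (\<lambda>v. restrict (\<lambda>p. multiplicity p v) P) (smooth P) (PiE P (\<lambda>_. UNIV))"
proof (rule bij_betw_byWitness[where f' = "\<lambda>g. \<Prod>p\<in>P. p ^ g p"])
  show "\<forall>v\<in>smooth P. (\<Prod>p\<in>P. p ^ restrict (\<lambda>p. multiplicity p v) P p) = v"
  proof
    fix v assume v: "v \<in> smooth P"
    have "(\<Prod>p\<in>P. p ^ restrict (\<lambda>p. multiplicity p v) P p) = (\<Prod>p\<in>P. p ^ multiplicity p v)"
      by (intro prod.cong) auto
    also have "\<dots> = v" using prime_factorization_superset'[of v P] v fin pr by (simp add: smooth_def)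
    finally show "(\<Prod>p\<in>P. p ^ restrict (\<lambda>p. multiplicity p v) P p) = v" .
  qed
  show "\<forall>g\<in>PiE P (\<lambda>_. UNIV). restrict (\<lambda>p. multiplicity p (\<Prod>p\<in>P. p ^ g p)) P = g"
  proof
    fix g assume g: "g \<in> PiE P (\<lambda>_. (UNIV :: nat set))"
    show "restrict (\<lambda>p. multiplicity p (\<Prod>p\<in>P. p ^ g p)) P = g"
    proof (rule ext)
      fix q
      show "restrict (\<lambda>p. multiplicity p (\<Prod>p\<in>P. p ^ g p)) P q = g q"
      proof (cases "q \<in> P")
        case True
        thus ?thesis using multiplicity_prod_prime_powers[OF fin, of q g] pr by simp
      next
        case False
        thus ?thesis using g by (simp add: PiE_def extensional_def)
      qed
    qed
  qed
  show "(\<lambda>v. restrict (\<lambda>p. multiplicity p v) P) ` smooth P \<subseteq> PiE P (\<lambda>_. UNIV)" by auto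
  show "(\<lambda>g. \<Prod>p\<in>P. p ^ g p) ` PiE P (\<lambda>_. UNIV) \<subseteq> smooth P"
  proof
    fix x assume "x \<in> (\<lambda>g. \<Prod>p\<in>P. p ^ g p) ` PiE P (\<lambda>_. (UNIV :: nat set))"
    then obtain g where x: "x = (\<Prod>p\<in>P. p ^ g p)" by auto
    have pos: "x \<ge> 1" using pr by (simp add: x prime_gt_0_nat prod_pos Suc_le_eq)
    have "prime_factors x \<subseteq> P"
    proof
      fix q assume "q \<in> prime_factors x"
      hence q: "prime q" "multiplicity q x > 0" by (auto simp: prime_factors_multiplicity)
      hence "q \<in> P" using multiplicity_prod_prime_powers[OF fin, of q g] pr x
        by (auto split: if_splits)
      thus "q \<in> P" .
    qed
    thus "x \<in> smooth P" using pos by (simp add: smooth_def)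
  qed
qed

lemma euler_smooth_has_sum:
  fixes G :: "nat \<Rightarrow> complex" and a :: "nat \<Rightarrow> nat \<Rightarrow> complex"
  assumes fin: "finite P" and pr: "\<forall>p\<in>P. prime p"
    and Gs: "G summable_on smooth P" and as: "\<forall>p\<in>P. a p summable_on UNIV"
    and rep: "\<forall>v\<in>smooth P. G v = (\<Prod>p\<in>P. a p (multiplicity p v))"
  shows "(G has_sum (\<Prod>p\<in>P. infsum (a p) UNIV)) (smooth P)"
proof -
  define \<iota> where "\<iota> = (\<lambda>v. restrict (\<lambda>p. multiplicity p v) P)"
  define F where "F = (\<lambda>g. \<Prod>p\<in>P. a p (g p))"
  have bij: "bij_betw \<iota> (smooth P) (PiE P (\<lambda>_. UNIV))" unfolding \<iota>_def using smooth_bij[OF fin pr] .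
  have GF: "G v = F (\<iota> v)" if "v \<in> smooth P" for v
    using rep that unfolding F_def \<iota>_def by (auto intro!: prod.cong)
  have "(\<lambda>v. F (\<iota> v)) summable_on smooth P" using Gs GF summable_on_cong by metis
  hence Fs: "F summable_on PiE P (\<lambda>_. UNIV)" using summable_on_reindex_bij_betw[OF bij] by blast
  have "infsum F (PiE P (\<lambda>_. UNIV)) = (\<Prod>p\<in>P. infsum (a p) UNIV)"
    unfolding F_def by (rule infsum_prod_PiE[OF fin]) (use as Fs[unfolded F_def] in auto)
  hence "(F has_sum (\<Prod>p\<in>P. infsum (a p) UNIV)) (PiE P (\<lambda>_. UNIV))"
    using Fs has_sum_infsum by metis
  hence "((\<lambda>v. F (\<iota> v)) has_sum (\<Prod>p\<in>P. infsum (a p) UNIV)) (smooth P)"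
    using has_sum_reindex_bij_betw[OF bij] by blast
  thus ?thesis using GF has_sum_cong by metis
qed

lemma multiplicity_le_self_nat:
  fixes p v :: nat assumes "prime p" "v > 0" shows "multiplicity p v \<le> v"
proof -
  have "multiplicity p v < 2 ^ multiplicity p v" by (rule less_exp)
  also have "\<dots> \<le> p ^ multiplicity p v" using assms by (intro power_mono) (auto simp: prime_ge_2_nat)
  also have "\<dots> \<le> v" using assms by (intro dvd_imp_le multiplicity_dvd) auto
  finally show ?thesis by simp
qed

lemma smooth_norm_bound:
  fixes G :: "nat \<Rightarrow> complex" and a :: "nat \<Rightarrow> nat \<Rightarrow> complex"
  assumes fin: "finite P" and pr: "\<forall>p\<in>P. prime p"
    and rep: "\<forall>v\<in>smooth P. G v = (\<Prod>p\<in>P. a p (multiplicity p v))"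
    and bnd: "\<forall>p\<in>P. \<forall>K. (\<Sum>k\<le>K. norm (a p k)) \<le> B p"
    and F: "finite F" "F \<subseteq> smooth P"
  shows "(\<Sum>v\<in>F. norm (G v)) \<le> prod B P"
proof -
  define \<iota> where "\<iota> = (\<lambda>v. restrict (\<lambda>p. multiplicity p v) P)"
  define K where "K = Max (insert 0 F)"
  have bij: "bij_betw \<iota> (smooth P) (PiE P (\<lambda>_. UNIV))" unfolding \<iota>_def using smooth_bij[OF fin pr] .
  have inj: "inj_on \<iota> F" using bij F(2) bij_betw_imp_inj_on inj_on_subset by blast
  have box: "\<iota> ` F \<subseteq> PiE P (\<lambda>_. {..K})"
  proof
    fix g assume "g \<in> \<iota> ` F"
    then obtain v where v: "v \<in> F" "g = \<iota> v" by auto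
    have "v > 0" using v F(2) by (auto simp: smooth_def)
    hence "multiplicity p v \<le> K" if "p \<in> P" for p
      using multiplicity_le_self_nat[of p v] pr that v F(1) unfolding K_def
      by (meson Max_ge finite_insert insertCI le_trans)
    thus "g \<in> PiE P (\<lambda>_. {..K})" using v unfolding \<iota>_def by auto
  qed
  have "(\<Sum>v\<in>F. norm (G v)) = (\<Sum>v\<in>F. \<Prod>p\<in>P. norm (a p (\<iota> v p)))"
    using rep F(2) unfolding \<iota>_def by (intro sum.cong) (auto simp: prod_norm)
  also have "\<dots> = (\<Sum>g\<in>\<iota> ` F. \<Prod>p\<in>P. norm (a p (g p)))"
    by (simp add: sum.reindex[OF inj])
  also have "\<dots> \<le> (\<Sum>g\<in>PiE P (\<lambda>_. {..K}). \<Prod>p\<in>P. norm (a p (g p)))"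
    by (intro sum_mono2 box) (auto simp: finite_PiE fin prod_nonneg)
  also have "\<dots> = (\<Prod>p\<in>P. \<Sum>k\<le>K. norm (a p k))"
    by (rule prod_sum_PiE[symmetric]) (auto simp: fin)
  also have "\<dots> \<le> prod B P"
    by (intro prod_mono) (auto simp: bnd sum_nonneg)
  finally show ?thesis .
qed

lemma G_summable:
  fixes G :: "nat \<Rightarrow> complex" and a :: "nat \<Rightarrow> nat \<Rightarrow> complex"
  assumes S: "finite S" "\<forall>p\<in>S. prime p"
    and rep: "\<And>P. finite P \<Longrightarrow> \<forall>p\<in>P. prime p \<Longrightarrow> S \<subseteq> P \<Longrightarrow>
                   \<forall>v\<in>smooth P. G v = (\<Prod>p\<in>P. a p (multiplicity p v))"
    and bnd: "\<And>p K. prime p \<Longrightarrow> (\<Sum>k\<le>K. norm (a p k)) \<le> B p"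
    and M: "\<And>P. finite P \<Longrightarrow> \<forall>p\<in>P. prime p \<Longrightarrow> prod B P \<le> M"
  shows "G summable_on {v. v \<ge> 1}"
proof -
  have "(\<lambda>v. norm (G v)) summable_on {v. v \<ge> 1}"
  proof (rule nonneg_bdd_above_summable_on)
    show "bdd_above (sum (\<lambda>v. norm (G v)) ` {F. F \<subseteq> {v. v \<ge> 1} \<and> finite F})"
    proof (rule bdd_aboveI2)
      fix F assume F: "F \<in> {F. F \<subseteq> {v. (v::nat) \<ge> 1} \<and> finite F}"
      define P where "P = S \<union> \<Union> (prime_factors ` F)"
      have Pf: "finite P" "\<forall>p\<in>P. prime p" "S \<subseteq> P" using S F by (auto simp: P_def)
      have "F \<subseteq> smooth P" using F by (auto simp: smooth_def P_def)
      hence "(\<Sum>v\<in>F. norm (G v)) \<le> prod B P"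
        using smooth_norm_bound[OF Pf(1,2) rep[OF Pf]] bnd Pf(2) F by auto
      also have "\<dots> \<le> M" using M Pf by blast
      finally show "(\<Sum>v\<in>F. norm (G v)) \<le> M" .
    qed
  qed auto
  thus ?thesis using summable_on_iff_abs_summable_on_complex by blast
qed

lemma smooth_limit:
  fixes G :: "nat \<Rightarrow> complex"
  assumes Gs: "G summable_on {v. v \<ge> 1}"
  shows "(\<lambda>x. infsum G (smooth {p. prime p \<and> p \<le> x})) \<longlonglongrightarrow> infsum G {v. v \<ge> 1}"
proof -
  define A where "A = {v::nat. v \<ge> 1}"
  define P where "P x = {p. prime p \<and> p \<le> x}" for x :: nat
  define g where "g n = (if n \<ge> 1 then norm (G n) else 0)" for n :: nat
  have nGs: "(\<lambda>v. norm (G v)) summable_on A" using Gs summable_on_iff_abs_summable_on_complex A_def by blast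
  have gs: "g summable_on UNIV"
  proof -
    have eq: "((\<lambda>v. norm (G v)) has_sum s) A \<longleftrightarrow> (g has_sum s) UNIV" for s
      by (rule has_sum_cong_neutral) (auto simp: g_def A_def)
    have "(g has_sum infsum (\<lambda>v. norm (G v)) A) UNIV"
      using eq has_sum_infsum[OF nGs] by blast
    thus ?thesis by (auto simp: summable_on_def)
  qed
  define Sg where "Sg = infsum g UNIV"
  have "g sums Sg" using gs by (simp add: Sg_def has_sum_imp_sums)
  hence lim1: "(\<lambda>n. sum g {..<n}) \<longlonglongrightarrow> Sg" by (simp add: sums_def)
  hence lim2: "(\<lambda>x. sum g {..<Suc x}) \<longlonglongrightarrow> Sg" using LIMSEQ_Suc by blast
  define t where "t x = Sg - sum g {..<Suc x}" for x
  have t0: "t \<longlonglongrightarrow> 0" unfolding t_def using tendsto_diff[OF tendsto_const lim2, of Sg] by simp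
  have sub: "smooth (P x) \<subseteq> A" for x by (auto simp: smooth_def A_def)
  have Dsub: "A - smooth (P x) \<subseteq> {x<..}" for x
  proof
    fix v assume v: "v \<in> A - smooth (P x)"
    show "v \<in> {x<..}"
    proof (rule ccontr)
      assume "v \<notin> {x<..}" hence "v \<le> x" by simp
      moreover have "v \<ge> 1" using v by (simp add: A_def)
      ultimately have "prime_factors v \<subseteq> P x"
        by (auto simp: P_def in_prime_factors_iff) (metis Suc_le_eq dvd_imp_le le_trans)
      thus False using v \<open>v \<ge> 1\<close> by (simp add: smooth_def)
    qed
  qed
  have bound: "norm (infsum G A - infsum G (smooth (P x))) \<le> t x" for x
  proof -
    have Au: "A = smooth (P x) \<union> (A - smooth (P x))" using sub by blast
    have "infsum G A = infsum G (smooth (P x)) + infsum G (A - smooth (P x))"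
      by (subst Au, rule infsum_Un_disjoint)
         (use summable_on_subset_banach[OF Gs[folded A_def] sub[of x]]
              summable_on_subset_banach[OF Gs[folded A_def] Diff_subset[of A "smooth (P x)"]] in auto)
    hence "infsum G A - infsum G (smooth (P x)) = infsum G (A - smooth (P x))" by simp
    also have "norm \<dots> \<le> infsum (\<lambda>v. norm (G v)) (A - smooth (P x))"
      by (rule norm_infsum_bound) (use nGs summable_on_subset_banach in blast)
    also have "\<dots> = infsum g (A - smooth (P x))"
      by (intro infsum_cong) (auto simp: g_def A_def)
    also have "\<dots> \<le> infsum g {x<..}"
      by (rule infsum_mono2) (use gs summable_on_subset_banach Dsub in \<open>auto simp: g_def\<close>)
    also have "infsum g {x<..} = t x"
    proof -
      have "Sg = infsum g ({..<Suc x} \<union> {x<..})" unfolding Sg_def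
        by (rule arg_cong[where f = "infsum g"]) auto
      also have "\<dots> = infsum g {..<Suc x} + infsum g {x<..}"
        by (rule infsum_Un_disjoint) (use gs summable_on_subset_banach in auto)
      finally show ?thesis by (simp add: t_def)
    qed
    finally show ?thesis .
  qed
  have "(\<lambda>x. infsum G A - infsum G (smooth (P x))) \<longlonglongrightarrow> 0"
    by (rule Lim_null_comparison[OF _ t0]) (use bound in auto)
  from tendsto_diff[OF tendsto_const this, of "infsum G A"]
  show ?thesis by (simp add: A_def P_def)
qed

lemma aloc_0:
  assumes dc: "dirichlet_character m chi" and p: "prime p"
  shows "aloc chi N w r p 0 = (if multiplicity p N = 0 then 1 / of_nat (totient (p ^ multiplicity p w)) else 0)"
  using p by (simp add: aloc_def dc_Suc0[OF dc])

lemma aloc_Suc: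
  assumes dc: "dirichlet_character m chi" and p: "prime p"
  shows "aloc chi N w r p (Suc j) = (if multiplicity p N \<le> Suc j then
     (chi p - 1) * of_nat p / (of_nat p ^ multiplicity p w * (of_nat p - 1) * of_nat p ^ (r + 1))
      * (chi p / of_nat p ^ (r + 1)) ^ j else 0)"
proof (cases "multiplicity p N \<le> Suc j")
  case True
  define b where "b = multiplicity p w"
  have p1: "(of_nat p :: complex) - 1 \<noteq> 0" "(of_nat p :: complex) \<noteq> 0"
    using prime_gt_1_nat[OF p] by (auto simp: of_nat_diff)
  have tot: "of_nat (totient (p ^ (Suc j + b))) = (of_nat p :: complex) ^ (j + b) * (of_nat p - 1)"
    using totient_prime_power[OF p, of "Suc j + b"] prime_gt_1_nat[OF p] by (simp add: of_nat_diff)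
  have hs: "h_chi chi (p ^ Suc j) = chi p ^ j * (chi p - 1)"
    using h_chi_prime_power[OF dc p, of "Suc j"] by simp
  have "aloc chi N w r p (Suc j) = h_chi chi (p ^ Suc j) / (of_nat (totient (p ^ (Suc j + b))) * of_nat p ^ (Suc j * r))"
    unfolding aloc_def b_def by (rule if_P[OF True])
  also have "\<dots> = chi p ^ j * (chi p - 1) / ((of_nat p) ^ (j + b) * (of_nat p - 1) * of_nat p ^ (Suc j * r))"
    unfolding hs tot ..
  also have "\<dots> = (chi p - 1) * of_nat p / (of_nat p ^ b * (of_nat p - 1) * of_nat p ^ (r + 1))
      * (chi p / of_nat p ^ (r + 1)) ^ j"
    using p1 by (simp add: field_simps power_add power_mult_distrib flip: power_mult)
  finally show ?thesis using True by (simp add: b_def)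
qed (simp add: aloc_def)

lemma norm_of_nat_minus_1: "p \<ge> 1 \<Longrightarrow> norm ((of_nat p :: complex) - 1) = real p - 1"
proof -
  assume "p \<ge> 1"
  hence "(of_nat p :: complex) - 1 = of_nat (p - 1)" by (simp add: of_nat_diff)
  hence "norm ((of_nat p :: complex) - 1) = real (p - 1)" by (metis norm_of_nat)
  thus ?thesis using \<open>p \<ge> 1\<close> by (simp add: of_nat_diff)
qed

lemma aloc_norm_Suc:
  assumes dc: "dirichlet_character m chi" and p: "prime p" and r: "r \<ge> 1"
  shows "norm (aloc chi N w r p (Suc j)) \<le> 4 * (1 / real p ^ 2) ^ Suc j"
proof -
  define P where "P = real p"
  define X where "X = P ^ (r + 1)"
  define b where "b = multiplicity p w"
  have P2: "P \<ge> 2" using prime_ge_2_nat[OF p] by (simp add: P_def)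
  have X2: "X \<ge> P ^ 2" unfolding X_def using P2 r by (intro power_increasing) auto
  have Xpos: "X > 0" using P2 by (simp add: X_def)
  have nchi: "norm (chi p) \<le> 1" by (rule dc_norm_le[OF dc])
  have n1: "norm (chi p - 1) \<le> 2" using norm_triangle_ineq4[of "chi p" 1] nchi by simp
  have "norm (aloc chi N w r p (Suc j)) \<le>
     norm (chi p - 1) * P / (P ^ b * (P - 1) * X) * (norm (chi p) / X) ^ j"
    using p prime_ge_1_nat[OF p]
    by (simp add: aloc_Suc[OF dc p] norm_mult norm_divide norm_power norm_of_nat_minus_1 P_def X_def b_def)
  also have "\<dots> \<le> 2 * P / (1 * (P - 1) * X) * (1 / X) ^ j"
  proof (intro mult_mono frac_le divide_right_mono power_mono)
    show "P ^ b \<ge> 1" using P2 by simp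
  qed (use n1 nchi P2 Xpos in auto)
  also have "\<dots> = (2 * P / (P - 1)) / X ^ Suc j" using P2 Xpos by (simp add: field_simps)
  also have "\<dots> \<le> 4 / X ^ Suc j"
    using P2 Xpos by (intro divide_right_mono) (auto simp: field_simps)
  also have "\<dots> \<le> 4 / (P ^ 2) ^ Suc j"
    using P2 X2 Xpos by (intro divide_left_mono power_mono mult_pos_pos) auto
  finally have "norm (aloc chi N w r p (Suc j)) \<le> 4 / (P ^ 2) ^ Suc j" .
  thus ?thesis by (simp only: P_def power_one_over)
qed

lemma aloc_norm_0:
  assumes dc: "dirichlet_character m chi" and p: "prime p"
  shows "norm (aloc chi N w r p 0) \<le> 1"
proof -
  have "totient (p ^ multiplicity p w) \<ge> 1" using p by (simp add: Suc_le_eq prime_gt_0_nat)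
  hence "1 / real (totient (p ^ multiplicity p w)) \<le> 1" by (simp add: divide_le_eq)
  thus ?thesis by (simp add: aloc_0[OF dc p] norm_divide)
qed

lemma aloc_partial:
  assumes dc: "dirichlet_character m chi" and p: "prime p" and r: "r \<ge> 1"
  shows "(\<Sum>k\<le>K. norm (aloc chi N w r p k)) \<le> 1 + 8 / real p ^ 2"
proof -
  define x where "x = 1 / real p ^ 2"
  have P2: "real p \<ge> 2" using prime_ge_2_nat[OF p] by simp
  have p4: "real p ^ 2 \<ge> 4" using power_mono[OF P2, of 2] by simp
  have x0: "x > 0" "x \<le> 1/4" using P2 p4 unfolding x_def by (auto simp: field_simps)
  have "(\<Sum>k\<le>K. norm (aloc chi N w r p k)) = norm (aloc chi N w r p 0) + (\<Sum>j<K. norm (aloc chi N w r p (Suc j)))"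
    by (rule sum.atMost_shift)
  also have "\<dots> \<le> 1 + (\<Sum>j<K. 4 * x * x ^ j)"
  proof (intro add_mono sum_mono aloc_norm_0[OF dc p])
    fix j show "norm (aloc chi N w r p (Suc j)) \<le> 4 * x * x ^ j"
      using aloc_norm_Suc[OF dc p r, of N w j] unfolding x_def by (simp only: power_Suc mult.assoc)
  qed
  also have "(\<Sum>j<K. 4 * x * x ^ j) = 4 * x * (\<Sum>j<K. x ^ j)" by (simp add: sum_distrib_left)
  also have "(\<Sum>j<K. x ^ j) \<le> 1 / (1 - x)"
  proof -
    have "(\<Sum>j<K. x ^ j) = (1 - x ^ K) / (1 - x)" using x0 by (simp add: sum_gp_strict)
    also have "\<dots> \<le> 1 / (1 - x)" using x0 by (intro divide_right_mono) auto
    finally show ?thesis .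
  qed
  hence "4 * x * (\<Sum>j<K. x ^ j) \<le> 4 * x * (1 / (1 - x))" using x0 by (intro mult_left_mono) auto
  also have "\<dots> \<le> 8 * x" using x0 by (simp add: field_simps)
  finally show ?thesis by (simp add: x_def)
qed

lemma aloc_summable:
  assumes dc: "dirichlet_character m chi" and p: "prime p" and r: "r \<ge> 1"
  shows "aloc chi N w r p summable_on UNIV"
proof -
  have "(\<lambda>k. norm (aloc chi N w r p k)) summable_on UNIV"
  proof (rule nonneg_bdd_above_summable_on)
    show "bdd_above (sum (\<lambda>k. norm (aloc chi N w r p k)) ` {F. F \<subseteq> UNIV \<and> finite F})"
    proof (rule bdd_aboveI2)
      fix F :: "nat set" assume F: "F \<in> {F. F \<subseteq> UNIV \<and> finite F}"
      have "(\<Sum>k\<in>F. norm (aloc chi N w r p k)) \<le> (\<Sum>k\<le>Max (insert 0 F). norm (aloc chi N w r p k))"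
        using F by (intro sum_mono2) auto
      also have "\<dots> \<le> 1 + 8 / real p ^ 2" by (rule aloc_partial[OF dc p r])
      finally show "(\<Sum>k\<in>F. norm (aloc chi N w r p k)) \<le> 1 + 8 / real p ^ 2" .
    qed
  qed auto
  thus ?thesis using summable_on_iff_abs_summable_on_complex by blast
qed

definition Zc :: real where "Zc = suminf (\<lambda>n. inverse (real n ^ 2))"

lemma prod_B_bound:
  assumes "finite P" "\<forall>p\<in>P. prime p"
  shows "(\<Prod>p\<in>P. 1 + 8 / real p ^ 2) \<le> exp (8 * Zc)"
proof -
  have "(\<Prod>p\<in>P. 1 + 8 / real p ^ 2) \<le> (\<Prod>p\<in>P. exp (8 * inverse (real p ^ 2)))"
    by (intro prod_mono) (auto simp: field_simps intro: order_trans[OF _ exp_ge_add_one_self])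
  also have "\<dots> = exp (\<Sum>p\<in>P. 8 * inverse (real p ^ 2))" by (simp add: exp_sum assms)
  also have "(\<Sum>p\<in>P. 8 * inverse (real p ^ 2)) = 8 * (\<Sum>p\<in>P. inverse (real p ^ 2))"
    by (simp add: sum_distrib_left)
  also have "(\<Sum>p\<in>P. inverse (real p ^ 2)) \<le> Zc"
    unfolding Zc_def
    by (rule sum_le_suminf) (use inverse_power_summable[of 2, where 'a = real] assms in auto)
  hence "exp (8 * (\<Sum>p\<in>P. inverse (real p ^ 2))) \<le> exp (8 * Zc)" by simp
  finally show ?thesis .
qed

lemma X_minus_chi_nz:
  assumes dc: "dirichlet_character m chi" and p: "prime p"
  shows "(of_nat p :: complex) ^ (r + 1) - chi p \<noteq> 0"
proof
  assume "(of_nat p :: complex) ^ (r + 1) - chi p = 0"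
  hence "norm (chi p) = real p ^ (r + 1)" by (metis eq_iff_diff_eq_0 norm_of_nat norm_power)
  moreover have "real p ^ (r + 1) \<ge> real p ^ 1" using prime_ge_1_nat[OF p] by (intro power_increasing) auto
  moreover have "real p \<ge> 2" using prime_ge_2_nat[OF p] by simp
  moreover have "norm (chi p) \<le> 1" using dc_norm_le[OF dc, of p] .
  ultimately show False by (simp only: power_one_right)
qed

lemma D_nz:
  assumes dc: "dirichlet_character m chi" and p: "prime p" and r: "r \<ge> 1"
  shows "(of_nat p :: complex) ^ (r + 2) - of_nat p ^ (r + 1) - of_nat p + chi p \<noteq> 0"
proof
  define P where "P = real p"
  have P2: "P \<ge> 2" using prime_ge_2_nat[OF p] by (simp add: P_def)
  have "P ^ (r + 1) \<ge> P ^ 2" using P2 r by (intro power_increasing) auto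
  hence "P ^ (r + 1) * (P - 1) \<ge> P ^ 2 * (P - 1)" using P2 by (intro mult_right_mono) auto
  moreover have "P ^ 2 * (P - 1) - P \<ge> 2"
  proof -
    have "P * (P - 1) \<ge> 2 * 1" using P2 by (intro mult_mono) auto
    hence "P * (P * (P - 1) - 1) \<ge> 2 * 1" using P2 by (intro mult_mono) auto
    thus ?thesis by (simp add: power2_eq_square algebra_simps)
  qed
  ultimately have R: "P ^ (r + 2) - P ^ (r + 1) - P \<ge> 2" by (simp add: algebra_simps)
  assume "(of_nat p :: complex) ^ (r + 2) - of_nat p ^ (r + 1) - of_nat p + chi p = 0"
  hence "chi p = - of_real (P ^ (r + 2) - P ^ (r + 1) - P)" by (simp add: P_def algebra_simps)
  hence "norm (chi p) = P ^ (r + 2) - P ^ (r + 1) - P" using R by (simp only: norm_minus_cancel norm_of_real)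
  thus False using R dc_norm_le[OF dc, of p] by simp
qed

lemma B_factor_eq:
  assumes dc: "dirichlet_character m chi" and p: "prime p"
  shows "B_factor chi r p = ((of_nat p :: complex) ^ (r + 2) - of_nat p ^ (r + 1) - of_nat p + chi p) /
            ((of_nat p - 1) * (of_nat p ^ (r + 1) - chi p))"
proof -
  have nz: "(of_nat p :: complex) - 1 \<noteq> 0" using prime_gt_1_nat[OF p] by (auto simp: of_nat_diff)
  have nz2: "(of_nat p :: complex) ^ (r + 1) - chi p \<noteq> 0" by (rule X_minus_chi_nz[OF dc p])
  have d: "(of_nat p - 1) * ((of_nat p :: complex) ^ (r + 1) - chi p) \<noteq> 0" using nz nz2 by simp
  have gen: "1 + a / d = (d + a) / d" if "d \<noteq> 0" for a d :: complex using that by (simp add: field_simps)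
  have ring: "(of_nat p - 1) * ((of_nat p :: complex) ^ (r + 1) - chi p) + of_nat p * (chi p - 1)
     = of_nat p ^ (r + 2) - of_nat p ^ (r + 1) - of_nat p + chi p"
    by (simp add: algebra_simps power_add)
  show ?thesis unfolding B_factor_def gen[OF d] ring ..
qed

lemma aloc_has_sum:
  fixes N w p r m :: nat and chi :: "nat \<Rightarrow> complex"
  assumes dc: "dirichlet_character m chi" and p: "prime p" and r: "r \<ge> 1"
  defines "\<alpha> \<equiv> multiplicity p N" and "\<beta> \<equiv> multiplicity p w"
    and "q \<equiv> chi p / (of_nat p) ^ (r + 1)"
    and "c0 \<equiv> (chi p - 1) * of_nat p / (of_nat p ^ multiplicity p w * (of_nat p - 1) * (of_nat p) ^ (r + 1))"
  shows "(aloc chi N w r p has_sum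
     (if \<alpha> = 0 then 1 / of_nat (totient (p ^ \<beta>)) + c0 / (1 - q) else c0 * q ^ (\<alpha> - 1) / (1 - q))) UNIV"
proof -
  define f where "f = aloc chi N w r p"
  have fS: "f (Suc j) = (if \<alpha> \<le> Suc j then c0 * q ^ j else 0)" for j
    unfolding f_def aloc_Suc[OF dc p] \<alpha>_def \<beta>_def c0_def q_def ..
  have f0: "f 0 = (if \<alpha> = 0 then 1 / of_nat (totient (p ^ \<beta>)) else 0)"
    unfolding f_def aloc_0[OF dc p] \<alpha>_def \<beta>_def ..
  have nq: "norm q < 1"
  proof -
    have "real p ^ (r + 1) \<ge> real p ^ 1" using prime_ge_1_nat[OF p] by (intro power_increasing) auto
    hence a: "real p ^ (r + 1) \<ge> real p" by (simp only: power_one_right)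
    moreover have "real p \<ge> 2" using prime_ge_2_nat[OF p] by simp
    ultimately have X2: "real p ^ (r + 1) \<ge> 2" by linarith
    have c1: "norm (chi p) \<le> 1" using dc_norm_le[OF dc, of p] .
    have nX: "norm ((of_nat p :: complex) ^ (r + 1)) = real p ^ (r + 1)" by (simp only: norm_power norm_of_nat)
    have "norm q = norm (chi p) / real p ^ (r + 1)" unfolding q_def by (simp only: norm_divide nX)
    also have "\<dots> < 1" using X2 c1 by (simp add: divide_less_eq)
    finally show ?thesis .
  qed
  have geo: "(\<lambda>j. c * q ^ j) sums (c / (1 - q))" for c
    using sums_mult[OF geometric_sums[OF nq], of c] by simp
  have "f summable_on UNIV" unfolding f_def by (rule aloc_summable[OF dc p r])
  hence "(\<lambda>n. norm (f n)) summable_on UNIV" using summable_on_iff_abs_summable_on_complex by blast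
  hence ns: "summable (\<lambda>n. norm (f n))" using summable_on_UNIV_nonneg_real_iff by (metis norm_ge_zero)
  have fs: "f sums (if \<alpha> = 0 then 1 / of_nat (totient (p ^ \<beta>)) + c0 / (1 - q) else c0 * q ^ (\<alpha> - 1) / (1 - q))"
  proof (cases "\<alpha>")
    case 0
    have "(\<lambda>i. f (i + 1)) = (\<lambda>i. c0 * q ^ i)" by (rule ext) (simp add: fS 0)
    hence "(\<lambda>i. f (i + 1)) sums (c0 / (1 - q))" using geo by simp
    hence "f sums (c0 / (1 - q) + (\<Sum>i<1. f i))" by (simp only: sums_iff_shift)
    thus ?thesis using 0 f0 by (simp add: add.commute)
  next
    case (Suc a)
    have "(\<lambda>i. f (i + Suc a)) = (\<lambda>i. (c0 * q ^ a) * q ^ i)"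
      by (rule ext) (simp add: fS Suc power_add mult_ac)
    hence "(\<lambda>i. f (i + Suc a)) sums (c0 * q ^ a / (1 - q))" using geo by simp
    hence "f sums (c0 * q ^ a / (1 - q) + (\<Sum>i<Suc a. f i))" by (simp only: sums_iff_shift)
    moreover have "(\<Sum>i<Suc a. f i) = 0"
    proof (intro sum.neutral ballI)
      fix i assume i: "i \<in> {..<Suc a}"
      show "f i = 0"
      proof (cases i)
        case 0 thus ?thesis using f0 Suc by simp
      next
        case (Suc j) thus ?thesis using fS i \<open>\<alpha> = Suc a\<close> by simp
      qed
    qed
    ultimately show ?thesis using Suc by simp
  qed
  show ?thesis using norm_summable_imp_has_sum[OF ns fs] unfolding f_def .
qed

definition cp :: "(nat \<Rightarrow> complex) \<Rightarrow> nat \<Rightarrow> nat \<Rightarrow> nat \<Rightarrow> nat \<Rightarrow> complex" where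
  "cp chi N w r p = h_chi chi (p ^ multiplicity p N) * of_nat p /
     (of_nat p ^ (multiplicity p N * (r + 1)) * of_nat p ^ multiplicity p w) *
     (if multiplicity p N > 0
      then of_nat p ^ (r + 1) / (of_nat p ^ (r + 2) - of_nat p ^ (r + 1) - of_nat p + chi p)
      else (of_nat p ^ (r + 1) - 1) / (of_nat p ^ (r + 2) - of_nat p ^ (r + 1) - of_nat p + chi p))"

lemma alg1:
  fixes P Q X Y c D Pb :: complex
  assumes "P \<noteq> 0" "Q \<noteq> 0" "X \<noteq> 0" "Y \<noteq> 0" "D \<noteq> 0" "Pb \<noteq> 0"
  shows "(c - 1) * P / (Pb * Q * X) * (c / X) ^ a / (Y / X) =
         c ^ a * (c - 1) * P / ((X * X ^ a) * Pb) * (X / D) * (D / (Q * Y))"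
  using assms by (simp add: field_simps power_divide)

lemma alg2:
  fixes P Q X Y c D Pb :: complex
  assumes "P \<noteq> 0" "Q \<noteq> 0" "X \<noteq> 0" "Y \<noteq> 0" "D \<noteq> 0" "Pb \<noteq> 0" "c = X - Y"
  shows "1 / (Pb * Q) + (c - 1) * P / (P * Pb * Q * X) / (Y / X) =
         P / (P * Pb) * ((X - 1) / D) * (D / (Q * Y))"
  using assms(1-6) unfolding assms(7) by (simp add: field_simps)

lemma alg0:
  fixes P Q X Y c :: complex
  assumes "P \<noteq> 0" "Q \<noteq> 0" "X \<noteq> 0" "Y \<noteq> 0"
  shows "1 + (c - 1) * P / (1 * Q * X) / (Y / X) = 1 + P * (c - 1) / (Q * Y)"
  using assms by (simp add: field_simps)

lemma loc_basic_facts: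
  assumes dc: "dirichlet_character m chi" and p: "prime p" and r: "r \<ge> 1"
  shows "(of_nat p :: complex) \<noteq> 0" "(of_nat p :: complex) - 1 \<noteq> 0" "(of_nat p :: complex) ^ (r + 1) \<noteq> 0"
    "(of_nat p :: complex) ^ (r + 1) - chi p \<noteq> 0"
    "(of_nat p :: complex) ^ (r + 2) - of_nat p ^ (r + 1) - of_nat p + chi p \<noteq> 0"
    "1 - chi p / (of_nat p :: complex) ^ (r + 1) = ((of_nat p :: complex) ^ (r + 1) - chi p) / of_nat p ^ (r + 1)"
proof -
  show 1: "(of_nat p :: complex) \<noteq> 0" using p by (simp add: prime_gt_0_nat)
  show "(of_nat p :: complex) - 1 \<noteq> 0" using prime_gt_1_nat[OF p] by (auto simp: of_nat_diff)
  show 3: "(of_nat p :: complex) ^ (r + 1) \<noteq> 0" using 1 by simp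
  show "(of_nat p :: complex) ^ (r + 1) - chi p \<noteq> 0" by (rule X_minus_chi_nz[OF dc p])
  show "(of_nat p :: complex) ^ (r + 2) - of_nat p ^ (r + 1) - of_nat p + chi p \<noteq> 0" by (rule D_nz[OF dc p r])
  show "1 - chi p / (of_nat p :: complex) ^ (r + 1) = ((of_nat p :: complex) ^ (r + 1) - chi p) / of_nat p ^ (r + 1)"
    using 3 by (simp add: field_simps)
qed

lemma loc_trivial:
  assumes dc: "dirichlet_character m chi" and p: "prime p" and r: "r \<ge> 1"
    and a0: "multiplicity p N = 0" and b0: "multiplicity p w = 0"
  shows "(aloc chi N w r p has_sum B_factor chi r p) UNIV"
proof -
  note F = loc_basic_facts[OF dc p r]
  have "(aloc chi N w r p has_sum (1 + (chi p - 1) * of_nat p / (1 * (of_nat p - 1) * of_nat p ^ (r + 1)) /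
      ((of_nat p ^ (r + 1) - chi p) / of_nat p ^ (r + 1)))) UNIV"
    using aloc_has_sum[OF dc p r, of N w] a0 b0 F(6) by simp
  also have "(1 + (chi p - 1) * of_nat p / (1 * (of_nat p - 1) * of_nat p ^ (r + 1)) /
      ((of_nat p ^ (r + 1) - chi p) / of_nat p ^ (r + 1))) = B_factor chi r p"
    unfolding B_factor_def by (rule alg0[OF F(1-4)])
  finally show ?thesis .
qed

lemma loc_S:
  assumes dc: "dirichlet_character m chi" and p: "prime p" and r: "r \<ge> 1"
    and S: "multiplicity p N > 0 \<or> multiplicity p w > 0"
  shows "(aloc chi N w r p has_sum (cp chi N w r p * B_factor chi r p)) UNIV"
proof -
  note F = loc_basic_facts[OF dc p r]
  define P where "P = (of_nat p :: complex)"
  define X where "X = P ^ (r + 1)"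
  define D where "D = P ^ (r + 2) - P ^ (r + 1) - P + chi p"
  have Pb: "P ^ k \<noteq> 0" for k using F(1) by (simp add: P_def)
  have B: "B_factor chi r p = D / ((P - 1) * (X - chi p))"
    unfolding B_factor_eq[OF dc p] D_def P_def X_def ..
  show ?thesis
  proof (cases "multiplicity p N")
    case (Suc a)
    have hN: "h_chi chi (p ^ multiplicity p N) = chi p ^ a * (chi p - 1)"
      using h_chi_prime_power[OF dc p, of "Suc a"] Suc by simp
    have XX: "P ^ (multiplicity p N * (r + 1)) = X * X ^ a"
    proof -
      have "P ^ (multiplicity p N * (r + 1)) = P ^ ((r + 1) * Suc a)" unfolding Suc by (simp only: mult.commute)
      also have "\<dots> = X ^ Suc a" unfolding X_def by (rule power_mult)
      finally show ?thesis by (simp only: power_Suc)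
    qed
    have "(aloc chi N w r p has_sum ((chi p - 1) * P / (P ^ multiplicity p w * (P - 1) * X) * (chi p / X) ^ a /
      ((X - chi p) / X))) UNIV"
      using aloc_has_sum[OF dc p r, of N w] Suc F(6) unfolding P_def X_def by simp
    also have "(chi p - 1) * P / (P ^ multiplicity p w * (P - 1) * X) * (chi p / X) ^ a / ((X - chi p) / X)
       = chi p ^ a * (chi p - 1) * P / ((X * X ^ a) * P ^ multiplicity p w) * (X / D) * (D / ((P - 1) * (X - chi p)))"
      by (rule alg1) (use F Pb in \<open>simp_all add: P_def X_def D_def\<close>)
    also have "\<dots> = cp chi N w r p * B_factor chi r p"
      unfolding cp_def B hN unfolding P_def[symmetric] unfolding D_def[symmetric] unfolding X_def[symmetric] XX using Suc by simp
    finally show ?thesis .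
  next
    case 0
    then obtain b where b: "multiplicity p w = Suc b" using S by (cases "multiplicity p w") auto
    have tot: "of_nat (totient (p ^ multiplicity p w)) = P ^ b * (P - 1)"
      unfolding b P_def using totient_prime_power_Suc[OF p, of b] prime_gt_1_nat[OF p]
      by (simp add: of_nat_diff)
    have "(aloc chi N w r p has_sum (1 / (P ^ b * (P - 1)) + (chi p - 1) * P / (P * P ^ b * (P - 1) * X) /
      ((X - chi p) / X))) UNIV"
      using aloc_has_sum[OF dc p r, of N w] 0 F(6) tot unfolding P_def X_def by (simp add: b)
    also have "1 / (P ^ b * (P - 1)) + (chi p - 1) * P / (P * P ^ b * (P - 1) * X) / ((X - chi p) / X)
       = P / (P * P ^ b) * ((X - 1) / D) * (D / ((P - 1) * (X - chi p)))"
      by (rule alg2) (use F Pb in \<open>simp_all add: P_def X_def D_def\<close>)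
    also have "\<dots> = cp chi N w r p * B_factor chi r p"
      unfolding cp_def B using 0 b by (simp add: P_def X_def D_def dc_Suc0[OF dc])
    finally show ?thesis .
  qed
qed

lemma cprod:
  assumes dc: "dirichlet_character m chi" and N: "N > 0" and w: "w > 0"
  shows "(\<Prod>p\<in>prime_factors (N * w). cp chi N w r p) = c_chi chi N w r"
proof -
  define S where "S = prime_factors (N * w)"
  have Sf: "finite S" "\<forall>p\<in>S. prime p" by (auto simp: S_def)
  have pfS: "prime_factors N \<subseteq> S" "prime_factors w \<subseteq> S" using N w by (auto simp: S_def prime_factors_product)
  define X where "X = (\<lambda>p. (of_nat p :: complex) ^ (r + 1))"
  define D where "D = (\<lambda>p. (of_nat p :: complex) ^ (r + 2) - of_nat p ^ (r + 1) - of_nat p + chi p)"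
  have cpe: "cp chi N w r p = h_chi chi (p ^ multiplicity p N) * of_nat p /
     ((of_nat p ^ multiplicity p N) ^ (r + 1) * of_nat p ^ multiplicity p w) *
     (if p \<in> prime_factors N then X p / D p else (X p - 1) / D p)" if "p \<in> S" for p
  proof -
    have mp: "(multiplicity p N > 0) = (p \<in> prime_factors N)" using Sf that by (auto simp: prime_factors_multiplicity)
    have pm: "(of_nat p::complex) ^ (multiplicity p N * (r + 1)) = (of_nat p ^ multiplicity p N) ^ (r + 1)"
      by (rule power_mult)
    show ?thesis unfolding cp_def pm X_def D_def mp ..
  qed
  have h: "(\<Prod>p\<in>S. h_chi chi (p ^ multiplicity p N)) = h_chi chi N"
    by (rule multiplicative_superset[OF _ _ N Sf pfS(1), symmetric])
       (auto simp: h_chi_mult[OF dc] dc_Suc0[OF dc])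
  have k: "(\<Prod>p\<in>S. (of_nat p :: complex)) = of_nat (kappa (N * w))"
    by (simp add: kappa_def S_def)
  have n: "(\<Prod>p\<in>S. ((of_nat p :: complex) ^ multiplicity p N) ^ (r + 1)) = of_nat N ^ (r + 1)"
  proof -
    have "N = (\<Prod>p\<in>S. p ^ multiplicity p N)" using prime_factorization_superset[OF N Sf(1) pfS(1) Sf(2)] .
    hence "(of_nat N :: complex) = of_nat (\<Prod>p\<in>S. p ^ multiplicity p N)" by (rule arg_cong)
    hence "(of_nat N :: complex) = (\<Prod>p\<in>S. (of_nat p) ^ multiplicity p N)" by (simp only: of_nat_prod of_nat_power)
    thus ?thesis by (simp only: prod_power_distrib[symmetric])
  qed
  have ww: "(\<Prod>p\<in>S. (of_nat p :: complex) ^ multiplicity p w) = of_nat w"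
  proof -
    have "w = (\<Prod>p\<in>S. p ^ multiplicity p w)" using prime_factorization_superset[OF w Sf(1) pfS(2) Sf(2)] .
    hence "(of_nat w :: complex) = of_nat (\<Prod>p\<in>S. p ^ multiplicity p w)" by (rule arg_cong)
    thus ?thesis by (simp only: of_nat_prod of_nat_power)
  qed
  have ifs: "(\<Prod>p\<in>S. if p \<in> prime_factors N then X p / D p else (X p - 1) / D p) =
       (\<Prod>p\<in>prime_factors N. X p / D p) * (\<Prod>p\<in>prime_factors w - prime_factors N. (X p - 1) / D p)"
  proof -
    have "(\<Prod>p\<in>S. if p \<in> prime_factors N then X p / D p else (X p - 1) / D p) =
       (\<Prod>p\<in>S \<inter> {p. p \<in> prime_factors N}. X p / D p) * (\<Prod>p\<in>S \<inter> - {p. p \<in> prime_factors N}. (X p - 1) / D p)"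
      by (rule prod.If_cases[OF Sf(1)])
    moreover have "S \<inter> {p. p \<in> prime_factors N} = prime_factors N" using pfS by auto
    moreover have "S \<inter> - {p. p \<in> prime_factors N} = prime_factors w - prime_factors N"
      using N w by (auto simp: S_def prime_factors_product)
    ultimately show ?thesis by simp
  qed
  have "(\<Prod>p\<in>S. cp chi N w r p) = (\<Prod>p\<in>S. h_chi chi (p ^ multiplicity p N) * of_nat p /
     ((of_nat p ^ multiplicity p N) ^ (r + 1) * of_nat p ^ multiplicity p w) *
     (if p \<in> prime_factors N then X p / D p else (X p - 1) / D p))"
    by (rule prod.cong) (simp_all add: cpe)
  also have "\<dots> = (\<Prod>p\<in>S. h_chi chi (p ^ multiplicity p N)) * (\<Prod>p\<in>S. of_nat p) /
     ((\<Prod>p\<in>S. (of_nat p ^ multiplicity p N) ^ (r + 1)) * (\<Prod>p\<in>S. of_nat p ^ multiplicity p w)) *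
     (\<Prod>p\<in>S. if p \<in> prime_factors N then X p / D p else (X p - 1) / D p)"
    by (simp only: prod.distrib prod_dividef)
  also have "\<dots> = c_chi chi N w r"
    unfolding h k n ww ifs unfolding c_chi_def X_def D_def by (simp only: mult.assoc)
  finally show ?thesis by (simp add: S_def)
qed

theorem lemma3p1:
  fixes chi :: "nat \<Rightarrow> complex" and m N w r :: nat
  assumes "dirichlet_character m chi" and "r \<ge> 1" and "N > 0" and "w > 0"
  shows "\<exists>B. ((\<lambda>x. \<Prod>p\<in>{p. prime p \<and> p \<le> x}. B_factor chi r p) \<longlonglongrightarrow> B) \<and>
             ((\<lambda>v. h_chi chi v / (of_nat (totient (v * w)) * of_nat v ^ r)) has_sum (c_chi chi N w r * B))
                {v. v \<ge> 1 \<and> N dvd v} \<and>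
             C_chi chi N w r = c_chi chi N w r * B \<and>
             ((\<lambda>v. h_chi chi v / (of_nat (totient v) * of_nat v ^ r)) has_sum B) {v. v \<ge> 1}"
proof -
  note dc = assms(1) and r = assms(2) and N = assms(3) and w = assms(4)
  define Px where "Px x = {p. prime p \<and> p \<le> x}" for x :: nat
  have Pxf: "finite (Px x)" "\<forall>p\<in>Px x. prime p" for x by (auto simp: Px_def)
  define S where "S = prime_factors (N * w)"
  have Sf: "finite S" "\<forall>p\<in>S. prime p" by (auto simp: S_def)
  define G where "G = Gf chi N w r"
  define G1 where "G1 = Gf chi 1 1 r"
  have rep: "\<forall>v\<in>smooth P. G v = (\<Prod>p\<in>P. aloc chi N w r p (multiplicity p v))"
    if "finite P" "\<forall>p\<in>P. prime p" "S \<subseteq> P" for P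
    using G_repr[OF dc N w _ that(1,2)] that(3) by (auto simp: smooth_def G_def S_def)
  have rep1: "\<forall>v\<in>smooth P. G1 v = (\<Prod>p\<in>P. aloc chi 1 1 r p (multiplicity p v))"
    if "finite P" "\<forall>p\<in>P. prime p" "{} \<subseteq> P" for P
    using G_repr[OF dc, of 1 1 _ P r] that by (auto simp: smooth_def G1_def)
  have bnd: "(\<Sum>k\<le>K. norm (aloc chi N' w' r p k)) \<le> 1 + 8 / real p ^ 2" if "prime p" for p K N' w'
    by (rule aloc_partial[OF dc that r])
  have M: "(\<Prod>p\<in>P. 1 + 8 / real p ^ 2) \<le> exp (8 * Zc)" if "finite P" "\<forall>p\<in>P. prime p" for P
    by (rule prod_B_bound[OF that])
  have Gs: "G summable_on {v. v \<ge> 1}"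
    by (rule G_summable[OF Sf rep bnd M])
  have G1s: "G1 summable_on {v. v \<ge> 1}"
    by (rule G_summable[of "{}", OF _ _ rep1 bnd M]) auto
  have smooth_sub: "smooth P \<subseteq> {v. v \<ge> 1}" for P by (auto simp: smooth_def)
  have L1: "infsum (aloc chi 1 1 r p) UNIV = B_factor chi r p" if "prime p" for p
    by (rule infsumI, rule loc_trivial[OF dc that r]) simp_all
  have LS: "infsum (aloc chi N w r p) UNIV = cp chi N w r p * B_factor chi r p" if "p \<in> S" for p
  proof -
    have "p dvd N * w" "prime p" using that by (auto simp: S_def in_prime_factors_iff)
    hence "p dvd N \<or> p dvd w" by (simp add: prime_dvd_mult_iff)
    hence "multiplicity p N > 0 \<or> multiplicity p w > 0" using N w \<open>prime p\<close>
      by (auto simp: prime_multiplicity_gt_zero_iff)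
    thus ?thesis by (intro infsumI loc_S[OF dc \<open>prime p\<close> r])
  qed
  have Lout: "infsum (aloc chi N w r p) UNIV = B_factor chi r p" if "prime p" "p \<notin> S" for p
  proof -
    have "\<not> p dvd N" "\<not> p dvd w" using that N w by (auto simp: S_def in_prime_factors_iff)
    hence "multiplicity p N = 0" "multiplicity p w = 0" by (auto simp: not_dvd_imp_multiplicity_0)
    thus ?thesis by (intro infsumI loc_trivial[OF dc that(1) r])
  qed
  have E1: "infsum G1 (smooth (Px x)) = (\<Prod>p\<in>Px x. B_factor chi r p)" for x
  proof -
    have "(G1 has_sum (\<Prod>p\<in>Px x. infsum (aloc chi 1 1 r p) UNIV)) (smooth (Px x))"
      by (rule euler_smooth_has_sum[OF Pxf summable_on_subset_banach[OF G1s smooth_sub]])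
         (use aloc_summable[OF dc _ r] rep1[OF Pxf] in \<open>auto simp: Px_def\<close>)
    moreover have "(\<Prod>p\<in>Px x. infsum (aloc chi 1 1 r p) UNIV) = (\<Prod>p\<in>Px x. B_factor chi r p)"
      using Pxf(2) L1 by (intro prod.cong) auto
    ultimately show ?thesis using infsumI by metis
  qed
  have E: "infsum G (smooth (Px x)) = (\<Prod>p\<in>S. cp chi N w r p) * (\<Prod>p\<in>Px x. B_factor chi r p)"
    if SP: "S \<subseteq> Px x" for x
  proof -
    have "(G has_sum (\<Prod>p\<in>Px x. infsum (aloc chi N w r p) UNIV)) (smooth (Px x))"
      by (rule euler_smooth_has_sum[OF Pxf summable_on_subset_banach[OF Gs smooth_sub]])
         (use aloc_summable[OF dc _ r] rep[OF Pxf SP] in \<open>auto simp: Px_def\<close>)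
    hence "infsum G (smooth (Px x)) = (\<Prod>p\<in>Px x. infsum (aloc chi N w r p) UNIV)" using infsumI by metis
    also have "\<dots> = (\<Prod>p\<in>Px x - S. infsum (aloc chi N w r p) UNIV) * (\<Prod>p\<in>S. infsum (aloc chi N w r p) UNIV)"
      by (rule prod.subset_diff[OF SP Pxf(1)])
    also have "(\<Prod>p\<in>Px x - S. infsum (aloc chi N w r p) UNIV) = (\<Prod>p\<in>Px x - S. B_factor chi r p)"
      using Pxf(2) Lout by (intro prod.cong) auto
    also have "(\<Prod>p\<in>S. infsum (aloc chi N w r p) UNIV) = (\<Prod>p\<in>S. cp chi N w r p) * (\<Prod>p\<in>S. B_factor chi r p)"
      using LS by (simp add: prod.distrib)
    also have "(\<Prod>p\<in>Px x - S. B_factor chi r p) * ((\<Prod>p\<in>S. cp chi N w r p) * (\<Prod>p\<in>S. B_factor chi r p))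
       = (\<Prod>p\<in>S. cp chi N w r p) * ((\<Prod>p\<in>Px x - S. B_factor chi r p) * (\<Prod>p\<in>S. B_factor chi r p))"
      by (simp only: mult_ac)
    also have "(\<Prod>p\<in>Px x - S. B_factor chi r p) * (\<Prod>p\<in>S. B_factor chi r p) = (\<Prod>p\<in>Px x. B_factor chi r p)"
      by (rule prod.subset_diff[OF SP Pxf(1), symmetric])
    finally show ?thesis .
  qed
  define B where "B = infsum G1 {v. v \<ge> 1}"
  have limB: "(\<lambda>x. \<Prod>p\<in>Px x. B_factor chi r p) \<longlonglongrightarrow> B"
    using smooth_limit[OF G1s] E1 unfolding B_def Px_def by simp
  have limG: "(\<lambda>x. infsum G (smooth (Px x))) \<longlonglongrightarrow> infsum G {v. v \<ge> 1}"
    using smooth_limit[OF Gs] unfolding Px_def by simp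
  have ev: "eventually (\<lambda>x. S \<subseteq> Px x) sequentially"
  proof -
    have "eventually (\<lambda>x. x \<ge> Max (insert 0 S)) sequentially" by (rule eventually_ge_at_top)
    thus ?thesis
    proof (rule eventually_mono)
      fix x assume x: "x \<ge> Max (insert 0 S)"
      show "S \<subseteq> Px x"
      proof
        fix p assume p: "p \<in> S"
        hence "p \<le> Max (insert 0 S)" using Sf by simp
        thus "p \<in> Px x" using x p Sf by (auto simp: Px_def)
      qed
    qed
  qed
  define c where "c = c_chi chi N w r"
  have cS: "(\<Prod>p\<in>S. cp chi N w r p) = c" unfolding S_def c_def by (rule cprod[OF dc N w])
  have "(\<lambda>x. c * (\<Prod>p\<in>Px x. B_factor chi r p)) \<longlonglongrightarrow> c * B" by (rule tendsto_mult_left[OF limB])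
  moreover have "eventually (\<lambda>x. c * (\<Prod>p\<in>Px x. B_factor chi r p) = infsum G (smooth (Px x))) sequentially"
    using ev by (rule eventually_mono) (simp add: E cS)
  ultimately have "(\<lambda>x. infsum G (smooth (Px x))) \<longlonglongrightarrow> c * B" using tendsto_cong by metis
  hence val: "infsum G {v. v \<ge> 1} = c * B" using limG LIMSEQ_unique by blast
  have hasG: "(G has_sum (c * B)) {v. v \<ge> 1}" using has_sum_infsum[OF Gs] val by simp
  have main: "((\<lambda>v. h_chi chi v / (of_nat (totient (v * w)) * of_nat v ^ r)) has_sum (c * B))
                {v. v \<ge> 1 \<and> N dvd v}"
  proof -
    have "(G has_sum (c * B)) {v. v \<ge> 1} \<longleftrightarrow>
          ((\<lambda>v. h_chi chi v / (of_nat (totient (v * w)) * of_nat v ^ r)) has_sum (c * B)) {v. v \<ge> 1 \<and> N dvd v}"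
      by (rule has_sum_cong_neutral) (auto simp: G_def Gf_def)
    thus ?thesis using hasG by blast
  qed
  have C: "C_chi chi N w r = c * B" unfolding C_chi_def by (rule infsumI[OF main])
  have hasB: "((\<lambda>v. h_chi chi v / (of_nat (totient v) * of_nat v ^ r)) has_sum B) {v. v \<ge> 1}"
  proof -
    have "(G1 has_sum B) {v. v \<ge> 1}" using has_sum_infsum[OF G1s] unfolding B_def .
    moreover have "G1 = (\<lambda>v. h_chi chi v / (of_nat (totient v) * of_nat v ^ r))"
      by (simp add: G1_def Gf_def fun_eq_iff)
    ultimately show ?thesis by simp
  qed
  show ?thesis
    using limB main C hasB unfolding Px_def c_def by blast
qed

end
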